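(* Let $H$ be a real or complex Hilbert space of dimension $n$, let $N\ge n$, let $F=\{f_i\}_{i=1}^N$ be a Parseval frame for $H$, and let $\{q_i\}_{i=1}^N$ be a weight number sequence. The following are equivalent: (i) the canonical dual of $F$ is a 1-erasure probabilistic optimal dual of $F$; (ii) the canonical dual of $F$ is a 1-erasure probabilistic spectrally optimal dual of $F$.
   Context: Inner products are linear in the first argument. A frame $F=\{f_i\}_{i=1}^N$ is Parseval if $\sum_i|\langle f,f_i\rangle|^2=\|f\|^2$ for all $f$; its canonical dual is $\{S_F^{-1}f_i\}=\{f_i\}$, where $S_F=\Theta_F^*\Theta_F$. Analysis operator: $\Theta_Ff=(\langle f,f_i\rangle)_i$. Synthesis operator: $\Theta_G^*(c)=\sum_ic_ig_i$. A dual of $F$ is a frame $G=\{g_i\}_{i=1}^N$ with $f=\sum_i\langle f,f_i\rangle g_i=\sum_i\langle f,g_i\rangle f_i$ for all $f$. A probability sequence satisfies $0\le p_i\le1$ and $\sum p_i=1$. Weight numbers: $q_i=\frac{\sum_jp_j}{\sum_jp_j-p_i}\cdot\frac{N-1}{n}$ (assumed well defined). $\mathcal{D}_1^p$ is the set of $N\times N$ diagonal matrices with exactly one nonzero diagonal entry, equal to $q_i$ at $(i,i)$. Two quantities are used: - $d_1^p(F,G)=\max\{\|\Theta_G^*D\Theta_F\|:D\in\mathcal{D}_1^p\}$ (operator norm); - $\mathcal{R}_1^p(F,G)=\max\{\rho(\Theta_G^*D\Theta_F):D\in\mathcal{D}_1^p\}$ ($\rho$ the spectral radius). $G$ is a 1-erasure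 probabilistic optimal dual of $F$ if $d_1^p(F,G)=\inf\{d_1^p(F,G'):G'\text{ a dual of }F\}$. $G$ is a 1-erasure probabilistic spectrally optimal dual of $F$ if $\mathcal{R}_1^p(F,G)=\inf\{\mathcal{R}_1^p(F,G'):G'\text{ a dual of }F\}$. *)

theory Defs
  imports "Jordan_Normal_Form.Spectral_Radius" "Jordan_Normal_Form.Gauss_Jordan_Elimination"
begin

text \<open>The Hilbert space H of dimension n is modelled as the coordinate space K^n
  (K = real or complex), i.e. vectors of carrier_vec n, with the standard inner product,
  linear in the first argument. Frames are indexed by i < N.\<close>

definition hinner :: "'a::{conjugatable_field,real_normed_field} vec \<Rightarrow> 'a vec \<Rightarrow> 'a" where
  "hinner u v = (\<Sum>k<dim_vec u. u $ k * conjugate (v $ k))"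

definition hnorm :: "'a::{conjugatable_field,real_normed_field} vec \<Rightarrow> real" where
  "hnorm v = sqrt (\<Sum>k<dim_vec v. (norm (v $ k))\<^sup>2)"

definition is_frame :: "nat \<Rightarrow> nat \<Rightarrow> (nat \<Rightarrow> 'a::{conjugatable_field,real_normed_field} vec) \<Rightarrow> bool" where
  "is_frame n N F \<longleftrightarrow> (\<forall>i<N. F i \<in> carrier_vec n) \<and>
     (\<exists>A B. 0 < A \<and> A \<le> B \<and> (\<forall>f \<in> carrier_vec n.
        A * (hnorm f)\<^sup>2 \<le> (\<Sum>i<N. (norm (hinner f (F i)))\<^sup>2) \<and>
        (\<Sum>i<N. (norm (hinner f (F i)))\<^sup>2) \<le> B * (hnorm f)\<^sup>2))"

definition is_parseval :: "nat \<Rightarrow> nat \<Rightarrow> (nat \<Rightarrow> 'a::{conjugatable_field,real_normed_field} vec) \<Rightarrow> bool" where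
  "is_parseval n N F \<longleftrightarrow> (\<forall>i<N. F i \<in> carrier_vec n) \<and>
     (\<forall>f \<in> carrier_vec n. (\<Sum>i<N. (norm (hinner f (F i)))\<^sup>2) = (hnorm f)\<^sup>2)"

text \<open>Analysis operator Theta_F f = (hinner f (F i))_i as an N x n matrix;
  synthesis operator Theta_G^* c = sum_i c_i G i as an n x N matrix.\<close>

definition analysis_op :: "nat \<Rightarrow> nat \<Rightarrow> (nat \<Rightarrow> 'a::{conjugatable_field,real_normed_field} vec) \<Rightarrow> 'a mat" where
  "analysis_op n N F = mat N n (\<lambda>(i, k). conjugate (F i $ k))"

definition synthesis_op :: "nat \<Rightarrow> nat \<Rightarrow> (nat \<Rightarrow> 'a::{conjugatable_field,real_normed_field} vec) \<Rightarrow> 'a mat" where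
  "synthesis_op n N G = mat n N (\<lambda>(k, i). G i $ k)"

definition frame_op :: "nat \<Rightarrow> nat \<Rightarrow> (nat \<Rightarrow> 'a::{conjugatable_field,real_normed_field} vec) \<Rightarrow> 'a mat" where
  "frame_op n N F = synthesis_op n N F * analysis_op n N F"

definition canonical_dual :: "nat \<Rightarrow> nat \<Rightarrow> (nat \<Rightarrow> 'a::{conjugatable_field,real_normed_field} vec) \<Rightarrow> nat \<Rightarrow> 'a vec" where
  "canonical_dual n N F i = (case mat_inverse (frame_op n N F) of Some B \<Rightarrow> B *\<^sub>v F i | None \<Rightarrow> F i)"

definition is_dual :: "nat \<Rightarrow> nat \<Rightarrow> (nat \<Rightarrow> 'a::{conjugatable_field,real_normed_field} vec) \<Rightarrow> (nat \<Rightarrow> 'a vec) \<Rightarrow> bool" where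
  "is_dual n N F G \<longleftrightarrow> is_frame n N G \<and>
     (\<forall>f \<in> carrier_vec n. f = synthesis_op n N G *\<^sub>v (analysis_op n N F *\<^sub>v f) \<and>
                          f = synthesis_op n N F *\<^sub>v (analysis_op n N G *\<^sub>v f))"

definition is_prob_seq :: "nat \<Rightarrow> (nat \<Rightarrow> real) \<Rightarrow> bool" where
  "is_prob_seq N p \<longleftrightarrow> (\<forall>i<N. 0 \<le> p i \<and> p i \<le> 1) \<and> (\<Sum>i<N. p i) = 1"

definition weight_num :: "nat \<Rightarrow> nat \<Rightarrow> (nat \<Rightarrow> real) \<Rightarrow> nat \<Rightarrow> real" where
  "weight_num n N p i = (\<Sum>j<N. p j) / ((\<Sum>j<N. p j) - p i) * ((real N - 1) / real n)"

definition erasure_mats :: "nat \<Rightarrow> nat \<Rightarrow> (nat \<Rightarrow> real) \<Rightarrow> 'a::{conjugatable_field,real_normed_field} mat set" where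
  "erasure_mats n N p = {mat N N (\<lambda>(j, k). if j = i \<and> k = i then of_real (weight_num n N p i) else 0) | i. i < N}"

definition op_norm :: "nat \<Rightarrow> 'a::{conjugatable_field,real_normed_field} mat \<Rightarrow> real" where
  "op_norm n A = Sup {hnorm (A *\<^sub>v v) | v. v \<in> carrier_vec n \<and> hnorm v \<le> 1}"

definition d1p :: "nat \<Rightarrow> nat \<Rightarrow> (nat \<Rightarrow> real) \<Rightarrow> (nat \<Rightarrow> 'a::{conjugatable_field,real_normed_field} vec) \<Rightarrow> (nat \<Rightarrow> 'a vec) \<Rightarrow> real" where
  "d1p n N p F G = Max ((\<lambda>D. op_norm n (synthesis_op n N G * D * analysis_op n N F)) ` erasure_mats n N p)"

text \<open>rho is the spectral radius on n x n matrices over the scalar field.\<close>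
definition R1p :: "('a mat \<Rightarrow> real) \<Rightarrow> nat \<Rightarrow> nat \<Rightarrow> (nat \<Rightarrow> real) \<Rightarrow> (nat \<Rightarrow> 'a::{conjugatable_field,real_normed_field} vec) \<Rightarrow> (nat \<Rightarrow> 'a vec) \<Rightarrow> real" where
  "R1p rho n N p F G = Max ((\<lambda>D. rho (synthesis_op n N G * D * analysis_op n N F)) ` erasure_mats n N p)"

definition prob_optimal_dual :: "nat \<Rightarrow> nat \<Rightarrow> (nat \<Rightarrow> real) \<Rightarrow> (nat \<Rightarrow> 'a::{conjugatable_field,real_normed_field} vec) \<Rightarrow> (nat \<Rightarrow> 'a vec) \<Rightarrow> bool" where
  "prob_optimal_dual n N p F G \<longleftrightarrow> is_dual n N F G \<and>
     d1p n N p F G = Inf {d1p n N p F G' | G'. is_dual n N F G'}"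

definition prob_spec_optimal_dual :: "('a mat \<Rightarrow> real) \<Rightarrow> nat \<Rightarrow> nat \<Rightarrow> (nat \<Rightarrow> real) \<Rightarrow> (nat \<Rightarrow> 'a::{conjugatable_field,real_normed_field} vec) \<Rightarrow> (nat \<Rightarrow> 'a vec) \<Rightarrow> bool" where
  "prob_spec_optimal_dual rho n N p F G \<longleftrightarrow> is_dual n N F G \<and>
     R1p rho n N p F G = Inf {R1p rho n N p F G' | G'. is_dual n N F G'}"

definition real_spectral_radius :: "real mat \<Rightarrow> real" where
  "real_spectral_radius A = spectral_radius (map_mat complex_of_real A)"

end

theory Submission
  imports Defs "HOL-Analysis.L2_Norm"
begin

class hfield0 = conjugatable_field + real_normed_field
class hfield = hfield0 +
  fixes hre :: "'a \<Rightarrow> real"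
  assumes hre_ax: "(z::'a) + conjugate z = (2 * hre z) *\<^sub>R 1"
  and hre_le: "hre (z::'a) \<le> norm z"
  and norm_conj: "norm (conjugate (z::'a)) = norm z"
  and mult_conj_ax: "(z::'a) * conjugate z = ((norm z)\<^sup>2) *\<^sub>R 1"
  and conj_of_real_ax: "conjugate (r *\<^sub>R (1::'a)) = r *\<^sub>R 1"

instance real :: hfield0 ..
instance complex :: hfield0 ..
instantiation real :: hfield begin
definition "hre (x::real) = x"
instance by standard (auto simp: hre_real_def power2_eq_square)
end
instantiation complex :: hfield begin
definition "hre (x::complex) = Re x"
instance apply standard
  apply (auto simp: hre_complex_def complex_add_cnj complex_norm_square complex_mult_cnj complex_is_Real_iff complex_eq_iff
     complex_Re_le_cmod cmod_power2)
  done
end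

lemma hre: "(z::'a::hfield) + conjugate z = of_real (2 * hre z)"
  using hre_ax[of z] by (simp add: of_real_def)
lemma mult_conj: "(z::'a::hfield) * conjugate z = of_real ((norm z)\<^sup>2)"
  using mult_conj_ax[of z] by (simp add: of_real_def)
lemma conj_of_real[simp]: "conjugate (of_real r :: 'a::hfield) = of_real r"
  using conj_of_real_ax[of r] by (simp add: of_real_def)
lemma hre_of_real[simp]: "hre (of_real r :: 'a::hfield) = r"
proof -
  have "(of_real (2*r) :: 'a) = of_real (2 * hre (of_real r :: 'a))"
    using hre[of "of_real r :: 'a"] by (simp add: of_real_add[symmetric])
  then show ?thesis by simp
qed
lemma hre_add: "hre ((a::'a::hfield) + b) = hre a + hre b"
proof -
  have "(of_real (2 * hre (a+b)) :: 'a) = (a + conjugate a) + (b + conjugate b)"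
    using hre[of "a+b"] by (simp add: conjugate_dist_add algebra_simps)
  also have "\<dots> = of_real (2*hre a) + of_real (2 * hre b)" by (simp only: hre)
  finally have "(of_real (2 * hre (a+b)) :: 'a) = of_real (2*hre a) + of_real (2 * hre b)" .
  then have "(of_real (2 * hre (a+b)) :: 'a) = of_real (2*hre a + 2 * hre b)" by simp
  then have "2 * hre (a+b) = 2*hre a + 2*hre b" by (simp only: of_real_eq_iff)
  then show ?thesis by linarith
qed
lemma hre_zero[simp]: "hre (0::'a::hfield) = 0"
  using hre_of_real[of 0] by simp
lemma hre_sum: "hre (sum (f :: _ \<Rightarrow> 'a::hfield) A) = (\<Sum>x\<in>A. hre (f x))"
  by (induct A rule: infinite_finite_induct) (auto simp: hre_add of_real_def[symmetric])

lemma conj_mult_of_real: "conjugate (of_real r * (z::'a::hfield)) = of_real r * conjugate z"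
  by (simp add: conjugate_dist_mul)

lemma hinner_sum: "dim_vec u = n \<Longrightarrow> hinner u v = (\<Sum>k<n. u $ k * conjugate (v $ k))"
  by (simp add: hinner_def)

lemma hnorm_sq: "(hnorm v)\<^sup>2 = (\<Sum>k<dim_vec v. (norm (v $ k))\<^sup>2)"
  proof -
  have "0 \<le> (\<Sum>k<dim_vec v. (norm (v $ k))\<^sup>2)" by (rule sum_nonneg) simp
  then show ?thesis unfolding hnorm_def by simp
qed

lemma hnorm_nonneg[simp]: "0 \<le> hnorm v"
  unfolding hnorm_def by (rule real_sqrt_ge_zero, rule sum_nonneg) simp

lemma hnorm_L2: "hnorm v = L2_set (\<lambda>k. norm (v $ k)) {..<dim_vec v}"
  unfolding hnorm_def L2_set_def by simp

lemma hinner_self: "hinner v (v :: 'a::hfield vec) = of_real ((hnorm v)\<^sup>2)"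
  unfolding hinner_def hnorm_sq by (simp add: mult_conj)

lemma hinner_swap: "dim_vec u = dim_vec v \<Longrightarrow> hinner v u = conjugate (hinner u (v :: 'a::hfield vec))"
  unfolding hinner_def by (simp add: sum_conjugate conjugate_dist_mul mult.commute)

lemma cs: assumes "dim_vec u = dim_vec v"
  shows "norm (hinner u (v :: 'a::hfield vec)) \<le> hnorm u * hnorm v"
proof -
  have "norm (hinner u v) \<le> (\<Sum>k<dim_vec u. norm (u $ k) * norm (v $ k))"
    unfolding hinner_def by (rule order.trans[OF norm_sum]) (simp add: norm_mult norm_conj)
  also have "\<dots> \<le> L2_set (\<lambda>k. norm (u $ k)) {..<dim_vec u} * L2_set (\<lambda>k. norm (v $ k)) {..<dim_vec u}"
    using L2_set_mult_ineq[of "\<lambda>k. norm (u $ k)" "\<lambda>k. norm (v $ k)" "{..<dim_vec u}"] by simp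
  finally show ?thesis using assms by (simp add: hnorm_L2)
qed

lemma sum1: "k < (n::nat) \<Longrightarrow> (\<And>j. j < n \<Longrightarrow> j \<noteq> k \<Longrightarrow> g j = 0) \<Longrightarrow> (\<Sum>j<n. g j) = g k"
  by (subst sum.mono_neutral_right[of "{..<n}" "{k}"]) auto

lemma sum2: "k < (n::nat) \<Longrightarrow> l < n \<Longrightarrow> k \<noteq> l \<Longrightarrow> (\<And>j. j < n \<Longrightarrow> j \<noteq> k \<Longrightarrow> j \<noteq> l \<Longrightarrow> g j = 0) \<Longrightarrow> (\<Sum>j<n. g j) = g k + g l"
  by (subst sum.mono_neutral_right[of "{..<n}" "{k,l}"]) auto

lemma conj_one[simp]: "conjugate (1::'a::hfield) = 1"
  using conj_of_real[of 1, where 'a='a] by simp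

lemma conj_diff: "conjugate ((a::'a::conjugatable_ring) - b) = conjugate a - conjugate b"
  using conjugate_dist_add[of a "-b"] conjugate_neg[of b] by simp

lemma parseval_form:
  fixes F :: "nat \<Rightarrow> 'a::hfield vec"
  assumes P: "is_parseval n N F" and f: "f \<in> carrier_vec n"
  shows "(\<Sum>k<n. \<Sum>l<n. f$k * conjugate (f$l) * (\<Sum>i<N. conjugate (F i $ k) * F i $ l)) = (\<Sum>k<n. f$k * conjugate (f$k))"
proof -
  have dimf: "dim_vec f = n" using f by auto
  have "(\<Sum>k<n. \<Sum>l<n. f$k * conjugate (f$l) * (\<Sum>i<N. conjugate (F i $ k) * F i $ l))
      = (\<Sum>i<N. (\<Sum>k<n. f$k * conjugate (F i $ k)) * (\<Sum>l<n. conjugate (f$l) * F i $ l))"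
  proof -
    have "(\<Sum>k<n. \<Sum>l<n. f$k * conjugate (f$l) * (\<Sum>i<N. conjugate (F i $ k) * F i $ l))
      = (\<Sum>k<n. \<Sum>l<n. \<Sum>i<N. (f$k * conjugate (F i $ k)) * (conjugate (f$l) * F i $ l))"
      by (simp add: sum_distrib_left mult_ac)
    also have "\<dots> = (\<Sum>k<n. \<Sum>i<N. \<Sum>l<n. (f$k * conjugate (F i $ k)) * (conjugate (f$l) * F i $ l))"
      by (rule sum.cong[OF refl], rule sum.swap)
    also have "\<dots> = (\<Sum>i<N. \<Sum>k<n. \<Sum>l<n. (f$k * conjugate (F i $ k)) * (conjugate (f$l) * F i $ l))"
      by (rule sum.swap)
    also have "\<dots> = (\<Sum>i<N. (\<Sum>k<n. f$k * conjugate (F i $ k)) * (\<Sum>l<n. conjugate (f$l) * F i $ l))"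
      by (simp add: sum_product)
    finally show ?thesis .
  qed
  also have "\<dots> = (\<Sum>i<N. hinner f (F i) * conjugate (hinner f (F i)))"
    by (simp add: hinner_def dimf sum_conjugate conjugate_dist_mul)
  also have "\<dots> = of_real (\<Sum>i<N. (norm (hinner f (F i)))\<^sup>2)"
    by (simp add: mult_conj)
  also have "\<dots> = of_real ((hnorm f)\<^sup>2)" using P f unfolding is_parseval_def by simp
  also have "\<dots> = hinner f f" by (simp add: hinner_self)
  also have "\<dots> = (\<Sum>k<n. f$k * conjugate (f$k))" by (simp add: hinner_def dimf)
  finally show ?thesis .
qed

lemma parseval_E:
  fixes F :: "nat \<Rightarrow> 'a::hfield vec"
  assumes P: "is_parseval n N F" and kl: "k < n" "l < n"
  shows "(\<Sum>i<N. F i $ k * conjugate (F i $ l)) = (if k = l then 1 else 0)"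
proof -
  define E where "E k l = (\<Sum>i<N. conjugate (F i $ k) * F i $ l)" for k l
  define T where "T k l = E k l - (if k = l then 1 else 0)" for k l
  have Q: "(\<Sum>k<n. \<Sum>l<n. f$k * conjugate (f$l) * T k l) = 0" if f: "f \<in> carrier_vec n" for f
  proof -
    have "(\<Sum>k<n. \<Sum>l<n. f$k * conjugate (f$l) * T k l) =
       (\<Sum>k<n. \<Sum>l<n. f$k * conjugate (f$l) * E k l) - (\<Sum>k<n. \<Sum>l<n. f$k * conjugate (f$l) * (if k = l then 1 else 0))"
      unfolding T_def by (simp only: right_diff_distrib sum_subtractf)
    also have "(\<Sum>k<n. \<Sum>l<n. f$k * conjugate (f$l) * (if k = l then 1 else 0)) = (\<Sum>k<n. f$k * conjugate (f$k))"
      by (rule sum.cong[OF refl], rule trans, rule sum1, auto)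
    also have "(\<Sum>k<n. \<Sum>l<n. f$k * conjugate (f$l) * E k l) = (\<Sum>k<n. f$k * conjugate (f$k))"
      unfolding E_def by (rule parseval_form[OF P f])
    finally show ?thesis by simp
  qed
  have hermE: "conjugate (E k l) = E l k" for k l
    unfolding E_def by (simp add: sum_conjugate conjugate_dist_mul mult.commute)
  have c1: "conjugate (1::'a) = 1" using conj_of_real[of 1, where 'a='a] by simp
  have herm: "conjugate (T k l) = T l k" for k l
    unfolding T_def using hermE[of k l] c1 by (auto simp: conj_diff)
  have diag: "T j j = 0" if j: "j < n" for j
  proof -
    define f :: "'a vec" where "f = vec n (\<lambda>m. if m = j then 1 else 0)"
    have "f \<in> carrier_vec n" unfolding f_def by simp
    from Q[OF this] have "(\<Sum>k<n. \<Sum>l<n. f$k * conjugate (f$l) * T k l) = 0" .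
    also have "(\<Sum>k<n. \<Sum>l<n. f$k * conjugate (f$l) * T k l) = T j j"
      using j unfolding f_def by (subst sum1[of j]; simp; subst sum1[of j]; simp)
    finally show ?thesis .
  qed
  have off: "T k l = 0" if kl: "k < n" "l < n" "k \<noteq> l" for k l
  proof -
    define c where "c = T k l"
    define f :: "'a vec" where "f = vec n (\<lambda>m. if m = k then 1 else if m = l then c else 0)"
    have "f \<in> carrier_vec n" unfolding f_def by simp
    from Q[OF this] have "(\<Sum>k<n. \<Sum>l<n. f$k * conjugate (f$l) * T k l) = 0" .
    also have "(\<Sum>k<n. \<Sum>l<n. f$k * conjugate (f$l) * T k l) =
        (T k k + conjugate c * T k l) + (c * T l k + c * conjugate c * T l l)"
      using kl unfolding f_def by (subst sum2[of k _ l]; simp; subst sum2[of k _ l]; simp; subst sum2[of k _ l]; simp)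
    finally have "conjugate c * c + c * conjugate c = 0"
      using diag[OF kl(1)] diag[OF kl(2)] herm[of k l] unfolding c_def by simp
    then have "2 * (c * conjugate c) = 0" by (simp add: mult.commute)
    then have "c = 0" by simp
    then show ?thesis unfolding c_def .
  qed
  have "T k l = 0" using diag off kl by (cases "k = l") auto
  then have "E l k = (if k = l then 1 else 0)" using herm[of k l] unfolding T_def by auto
  then show ?thesis unfolding E_def by (simp add: mult.commute)
qed

lemma MV1:
  assumes "dim_vec f = n"
  shows "synthesis_op n N G *\<^sub>v (analysis_op n N F *\<^sub>v f) = vec n (\<lambda>k. \<Sum>i<N. hinner f (F i) * G i $ k)"
  using assms
  by (auto intro!: eq_vecI sum.cong simp: synthesis_op_def analysis_op_def mult_mat_vec_def scalar_prod_def hinner_def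
      atLeast0LessThan mult.commute)

lemma recon_iff:
  assumes "f \<in> carrier_vec n"
  shows "(f = synthesis_op n N G *\<^sub>v (analysis_op n N F *\<^sub>v f)) \<longleftrightarrow> (\<forall>k<n. f $ k = (\<Sum>i<N. hinner f (F i) * G i $ k))"
  using assms by (auto simp: MV1 vec_eq_iff)

lemma frame_op_parseval:
  fixes F :: "nat \<Rightarrow> 'a::hfield vec"
  assumes P: "is_parseval n N F"
  shows "frame_op n N F = 1\<^sub>m n"
proof (rule eq_matI)
  fix k l assume kl: "k < dim_row (1\<^sub>m n :: 'a mat)" "l < dim_col (1\<^sub>m n :: 'a mat)"
  then have "frame_op n N F $$ (k, l) = (\<Sum>i<N. F i $ k * conjugate (F i $ l))"
    by (simp add: frame_op_def synthesis_op_def analysis_op_def scalar_prod_def atLeast0LessThan)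
  also have "\<dots> = (if k = l then 1 else 0)" using parseval_E[OF P] kl by simp
  finally show "frame_op n N F $$ (k, l) = 1\<^sub>m n $$ (k, l)" using kl by simp
qed (auto simp: frame_op_def synthesis_op_def analysis_op_def)

lemma parseval_recon:
  fixes F :: "nat \<Rightarrow> 'a::hfield vec"
  assumes P: "is_parseval n N F" and f: "f \<in> carrier_vec n"
  shows "f = synthesis_op n N F *\<^sub>v (analysis_op n N F *\<^sub>v f)"
proof -
  have "synthesis_op n N F *\<^sub>v (analysis_op n N F *\<^sub>v f) = (synthesis_op n N F * analysis_op n N F) *\<^sub>v f"
    by (rule assoc_mult_mat_vec[symmetric, of _ n N _ n]) (auto simp: synthesis_op_def analysis_op_def f)
  also have "\<dots> = f" using frame_op_parseval[OF P] f by (simp add: frame_op_def[symmetric])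
  finally show ?thesis by simp
qed

lemma canonical_dual_parseval:
  fixes F :: "nat \<Rightarrow> 'a::hfield vec"
  assumes P: "is_parseval n N F" and i: "i < N"
  shows "canonical_dual n N F i = F i"
proof -
  have Fi: "F i \<in> carrier_vec n" using P i unfolding is_parseval_def by auto
  have S: "frame_op n N F = 1\<^sub>m n" by (rule frame_op_parseval[OF P])
  show ?thesis
  proof (cases "mat_inverse (frame_op n N F)")
    case None then show ?thesis unfolding canonical_dual_def by simp
  next
    case (Some B)
    from mat_inverse(2)[OF _ Some, of n] S have "1\<^sub>m n * B = 1\<^sub>m n" "B \<in> carrier_mat n n" by auto
    then have "B = 1\<^sub>m n" by simp
    then show ?thesis unfolding canonical_dual_def Some using Fi by simp
  qed
qed

lemma parseval_frame:
  fixes F :: "nat \<Rightarrow> 'a::hfield vec"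
  assumes P: "is_parseval n N F"
  shows "is_frame n N F"
  using P unfolding is_parseval_def is_frame_def by (intro conjI exI[of _ 1]) auto

lemma parseval_dual_self:
  fixes F :: "nat \<Rightarrow> 'a::hfield vec"
  assumes P: "is_parseval n N F"
  shows "is_dual n N F F"
  using parseval_frame[OF P] parseval_recon[OF P] unfolding is_dual_def by auto

lemma frame_of_recon:
  fixes F G :: "nat \<Rightarrow> 'a::hfield vec"
  assumes P: "is_parseval n N F" and G: "\<forall>i<N. G i \<in> carrier_vec n"
    and R: "\<forall>f\<in>carrier_vec n. \<forall>k<n. f $ k = (\<Sum>i<N. hinner f (G i) * F i $ k)"
  shows "is_frame n N G"
proof -
  define B where "B = 1 + (\<Sum>i<N. (hnorm (G i))\<^sup>2)"
  have "B \<ge> 1" unfolding B_def by (simp add: sum_nonneg)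
  have main: "1 * (hnorm f)\<^sup>2 \<le> (\<Sum>i<N. (norm (hinner f (G i)))\<^sup>2) \<and>
        (\<Sum>i<N. (norm (hinner f (G i)))\<^sup>2) \<le> B * (hnorm f)\<^sup>2" if f: "f \<in> carrier_vec n" for f
  proof
    define X where "X = (\<Sum>i<N. (norm (hinner f (G i)))\<^sup>2)"
    have X0: "0 \<le> X" unfolding X_def by (simp add: sum_nonneg)
    have dimf: "dim_vec f = n" using f by simp
    have "(of_real ((hnorm f)\<^sup>2) :: 'a) = (\<Sum>k<n. f $ k * conjugate (f $ k))"
      using hinner_self[of f] hinner_sum[OF dimf, of f] by metis
    also have "\<dots> = (\<Sum>k<n. f $ k * conjugate (\<Sum>i<N. hinner f (G i) * F i $ k))"
      using R f by (intro sum.cong refl) (metis lessThan_iff)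
    also have "\<dots> = (\<Sum>k<n. \<Sum>i<N. conjugate (hinner f (G i)) * (f $ k * conjugate (F i $ k)))"
      by (simp add: sum_conjugate conjugate_dist_mul sum_distrib_left mult_ac)
    also have "\<dots> = (\<Sum>i<N. conjugate (hinner f (G i)) * hinner f (F i))"
      by (subst sum.swap) (simp add: hinner_def dimf sum_distrib_left)
    finally have eq: "(of_real ((hnorm f)\<^sup>2) :: 'a) = (\<Sum>i<N. conjugate (hinner f (G i)) * hinner f (F i))" .
    have "(hnorm f)\<^sup>2 = norm (of_real ((hnorm f)\<^sup>2) :: 'a)" by (simp only: norm_of_real) simp
    also have "\<dots> \<le> (\<Sum>i<N. norm (hinner f (G i)) * norm (hinner f (F i)))"
      unfolding eq by (rule order.trans[OF norm_sum]) (simp add: norm_mult norm_conj)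
    also have "\<dots> \<le> L2_set (\<lambda>i. norm (hinner f (G i))) {..<N} * L2_set (\<lambda>i. norm (hinner f (F i))) {..<N}"
      using L2_set_mult_ineq[of "\<lambda>i. norm (hinner f (G i))" "\<lambda>i. norm (hinner f (F i))" "{..<N}"] by simp
    also have "L2_set (\<lambda>i. norm (hinner f (F i))) {..<N} = hnorm f"
      using P f unfolding is_parseval_def L2_set_def by simp
    also have "L2_set (\<lambda>i. norm (hinner f (G i))) {..<N} = sqrt X"
      unfolding L2_set_def X_def by simp
    finally have ineq: "(hnorm f)\<^sup>2 \<le> sqrt X * hnorm f" .
    show "1 * (hnorm f)\<^sup>2 \<le> X"
    proof (cases "hnorm f = 0")
      case True then show ?thesis using X0 by simp
    next
      case False
      then have "hnorm f > 0" using hnorm_nonneg[of f] by linarith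
      with ineq have "hnorm f \<le> sqrt X" by (simp add: power2_eq_square)
      then have "(hnorm f)\<^sup>2 \<le> (sqrt X)\<^sup>2" by (rule power_mono) simp
      then show ?thesis using X0 by simp
    qed
    have "X \<le> (\<Sum>i<N. (hnorm f)\<^sup>2 * (hnorm (G i))\<^sup>2)"
      unfolding X_def
    proof (rule sum_mono)
      fix i assume i: "i \<in> {..<N}"
      have "norm (hinner f (G i)) \<le> hnorm f * hnorm (G i)" using G i f by (intro cs) auto
      then have "(norm (hinner f (G i)))\<^sup>2 \<le> (hnorm f * hnorm (G i))\<^sup>2" by (rule power_mono) simp
      then show "(norm (hinner f (G i)))\<^sup>2 \<le> (hnorm f)\<^sup>2 * (hnorm (G i))\<^sup>2" by (simp add: power_mult_distrib)
    qed
    also have "\<dots> = (hnorm f)\<^sup>2 * (B - 1)" unfolding B_def by (simp add: sum_distrib_left)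
    also have "\<dots> \<le> B * (hnorm f)\<^sup>2" by (simp add: algebra_simps)
    finally show "X \<le> B * (hnorm f)\<^sup>2" .
  qed
  show ?thesis unfolding is_frame_def
    using G main \<open>B \<ge> 1\<close> by (intro conjI exI[of _ 1] exI[of _ B]) auto
qed

lemma sum_delta_r: "finite A \<Longrightarrow> (\<Sum>j\<in>A. f j * (if j = i then c else 0)) = (if i \<in> A then f i * (c::'a::semiring_0) else 0)"
proof -
  assume A: "finite A"
  have eq: "(\<lambda>j. f j * (if j = i then c else 0)) = (\<lambda>j. if j = i then f i * c else 0)" by auto
  show ?thesis unfolding eq using A by simp
qed

lemma sum_delta_l: "finite A \<Longrightarrow> (\<Sum>j\<in>A. (if j = i then c else 0) * f j) = (if i \<in> A then (c::'a::semiring_0) * f i else 0)"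
proof -
  assume A: "finite A"
  have eq: "(\<lambda>j. (if j = i then c else 0) * f j) = (\<lambda>j. if j = i then c * f i else 0)" by auto
  show ?thesis unfolding eq using A by simp
qed

lemma rank1:
  assumes i: "i < N"
  shows "synthesis_op n N G * mat N N (\<lambda>(j, k). if j = i \<and> k = i then of_real q else 0) * analysis_op n N F
     = mat n n (\<lambda>(k, l). G i $ k * of_real q * conjugate (F i $ l))"
proof -
  have SD: "synthesis_op n N G * mat N N (\<lambda>(j, k). if j = i \<and> k = i then of_real q else 0)
      = mat n N (\<lambda>(k, j). if j = i then G i $ k * of_real q else 0)"
  proof (rule eq_matI)
    fix k j assume kj: "k < dim_row (mat n N (\<lambda>(k, j). if j = i then G i $ k * of_real q else (0::'a)))"
        "j < dim_col (mat n N (\<lambda>(k, j). if j = i then G i $ k * of_real q else (0::'a)))"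
    then show "(synthesis_op n N G * mat N N (\<lambda>(j, k). if j = i \<and> k = i then of_real q else 0)) $$ (k, j)
       = mat n N (\<lambda>(k, j). if j = i then G i $ k * of_real q else 0) $$ (k, j)"
      using i by (auto simp: synthesis_op_def scalar_prod_def sum_delta_r)
  qed (auto simp: synthesis_op_def)
  show ?thesis unfolding SD
  proof (rule eq_matI)
    fix k l assume kl: "k < dim_row (mat n n (\<lambda>(k, l). G i $ k * of_real q * conjugate (F i $ l)))"
      "l < dim_col (mat n n (\<lambda>(k, l). G i $ k * of_real q * conjugate (F i $ l)))"
    then show "(mat n N (\<lambda>(k, j). if j = i then G i $ k * of_real q else 0) * analysis_op n N F) $$ (k, l) =
         mat n n (\<lambda>(k, l). G i $ k * of_real q * conjugate (F i $ l)) $$ (k, l)"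
      using i by (auto simp: analysis_op_def scalar_prod_def sum_delta_l)
  qed (auto simp: analysis_op_def)
qed

lemma rank1_apply:
  assumes "v \<in> carrier_vec n"
  shows "mat n n (\<lambda>(k, l). g $ k * c * conjugate (f $ l)) *\<^sub>v v = vec n (\<lambda>k. g $ k * c * hinner v f)"
  using assms by (auto intro!: eq_vecI simp: scalar_prod_def hinner_def atLeast0LessThan sum_distrib_left mult_ac)

lemma hnorm_scale:
  assumes "dim_vec g = n"
  shows "hnorm (vec n (\<lambda>k. g $ k * s)) = norm s * hnorm (g :: 'a::hfield vec)"
proof -
  have "hnorm (vec n (\<lambda>k. g $ k * s)) = sqrt ((norm s)\<^sup>2 * (\<Sum>k<n. (norm (g $ k))\<^sup>2))"
    unfolding hnorm_def by (simp add: sum_distrib_left norm_mult power_mult_distrib mult_ac)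
  also have "\<dots> = norm s * hnorm g" unfolding hnorm_def using assms by (simp add: real_sqrt_mult)
  finally show ?thesis .
qed

lemma opnorm_rank1:
  fixes f g :: "'a::hfield vec"
  assumes g: "g \<in> carrier_vec n" and f: "f \<in> carrier_vec n"
  shows "op_norm n (mat n n (\<lambda>(k, l). g $ k * of_real q * conjugate (f $ l))) = \<bar>q\<bar> * hnorm f * hnorm g"
proof -
  define A where "A = mat n n (\<lambda>(k, l). g $ k * of_real q * conjugate (f $ l))"
  have val: "hnorm (A *\<^sub>v v) = \<bar>q\<bar> * norm (hinner v f) * hnorm g" if v: "v \<in> carrier_vec n" for v
  proof -
    have "A *\<^sub>v v = vec n (\<lambda>k. g $ k * (of_real q * hinner v f))"
      unfolding A_def using rank1_apply[OF v] by (simp add: mult.assoc)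
    then show ?thesis using g by (simp add: hnorm_scale norm_mult)
  qed
  define S where "S = {hnorm (A *\<^sub>v v) | v. v \<in> carrier_vec n \<and> hnorm v \<le> 1}"
  have ub: "x \<le> \<bar>q\<bar> * hnorm f * hnorm g" if "x \<in> S" for x
  proof -
    obtain v where v: "v \<in> carrier_vec n" "hnorm v \<le> 1" and x: "x = hnorm (A *\<^sub>v v)" using \<open>x \<in> S\<close> unfolding S_def by auto
    have "norm (hinner v f) \<le> hnorm v * hnorm f" using v f by (intro cs) auto
    also have "\<dots> \<le> 1 * hnorm f" using v(2) by (intro mult_right_mono) auto
    finally have "norm (hinner v f) \<le> hnorm f" by simp
    then have "\<bar>q\<bar> * norm (hinner v f) * hnorm g \<le> \<bar>q\<bar> * hnorm f * hnorm g"
      by (intro mult_right_mono mult_left_mono) auto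
    then show ?thesis using x val[OF v(1)] by simp
  qed
  have mem: "\<bar>q\<bar> * hnorm f * hnorm g \<in> S"
  proof (cases "hnorm f = 0")
    case True
    have "hnorm (A *\<^sub>v 0\<^sub>v n) = \<bar>q\<bar> * hnorm f * hnorm g"
      using val[of "0\<^sub>v n"] True by (simp add: hinner_def)
    moreover have "hnorm (0\<^sub>v n :: 'a vec) \<le> 1" by (simp add: hnorm_def)
    ultimately show ?thesis unfolding S_def by (intro CollectI exI[of _ "0\<^sub>v n"]) auto
  next
    case False
    then have hf: "hnorm f > 0" using hnorm_nonneg[of f] by linarith
    define v where "v = vec n (\<lambda>k. f $ k * of_real (1 / hnorm f))"
    have v: "v \<in> carrier_vec n" unfolding v_def by simp
    have "hnorm v = norm (of_real (1 / hnorm f) :: 'a) * hnorm f" unfolding v_def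
      by (rule hnorm_scale) (use f in simp)
    then have hv: "hnorm v = 1" using hf by (simp add: norm_of_real del: of_real_divide)
    have "hinner v f = of_real (1 / hnorm f) * hinner f f"
      unfolding v_def using f by (simp add: hinner_def sum_distrib_left mult_ac)
    also have "\<dots> = of_real (hnorm f)" using hf by (simp add: hinner_self power2_eq_square)
    finally have "norm (hinner v f) = hnorm f" by simp
    then have "hnorm (A *\<^sub>v v) = \<bar>q\<bar> * hnorm f * hnorm g" using val[OF v] by simp
    then show ?thesis unfolding S_def using v hv by (intro CollectI exI[of _ v]) auto
  qed
  show ?thesis unfolding op_norm_def A_def[symmetric] S_def[symmetric]
    by (rule cSup_eq_maximum[OF mem ub])
qed

lemma spec_rank1:
  fixes f g :: "complex vec"
  assumes n: "n > 0" and g: "g \<in> carrier_vec n" and f: "f \<in> carrier_vec n"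
  shows "spectral_radius (mat n n (\<lambda>(k, l). g $ k * c * conjugate (f $ l))) = cmod (c * hinner g f)"
proof -
  define A where "A = mat n n (\<lambda>(k, l). g $ k * c * conjugate (f $ l))"
  define l0 where "l0 = c * hinner g f"
  have Ac: "A \<in> carrier_mat n n" unfolding A_def by simp
  have sub: "\<mu> = 0 \<or> \<mu> = l0" if mu: "\<mu> \<in> spectrum A" for \<mu>
  proof (cases "\<mu> = 0")
    case True then show ?thesis by simp
  next
    case False
    note mu0 = False
    from mu obtain v where v: "v \<in> carrier_vec n" "v \<noteq> 0\<^sub>v n" "A *\<^sub>v v = \<mu> \<cdot>\<^sub>v v"
      unfolding spectrum_def eigenvalue_def eigenvector_def A_def by auto
    define s where "s = c * hinner v f"
    have Av: "A *\<^sub>v v = vec n (\<lambda>k. g $ k * s)" unfolding A_def s_def using rank1_apply[OF v(1)] by (simp add: mult.assoc)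
    have comp: "g $ k * s = \<mu> * v $ k" if k: "k < n" for k
    proof -
      have "(A *\<^sub>v v) $ k = (\<mu> \<cdot>\<^sub>v v) $ k" using v(3) by simp
      then show ?thesis unfolding Av using k v(1) by simp
    qed
    have s0: "s \<noteq> 0"
    proof
      assume "s = 0"
      then have "v $ k = 0" if "k < n" for k using comp[OF that] mu0 by simp
      then have "v = 0\<^sub>v n" using v(1) by (intro eq_vecI) auto
      with v(2) show False by simp
    qed
    have vk: "v $ k = (s / \<mu>) * g $ k" if "k < n" for k using comp[OF that] mu0 by (simp add: field_simps)
    have h: "hinner v f = (s / \<mu>) * hinner g f"
      using v(1) g by (simp add: hinner_def vk sum_distrib_left mult_ac)
    have "s = c * hinner v f" by (fact s_def)
    also have "\<dots> = c * ((s / \<mu>) * hinner g f)" by (simp only: h)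
    also have "\<dots> = (s / \<mu>) * l0" by (simp add: l0_def mult_ac)
    finally have "s = (s / \<mu>) * l0" .
    then have "\<mu> * s = s * l0" using mu0 by (simp add: field_simps)
    then have "\<mu> = l0" using s0 by (simp add: mult.commute)
    then show ?thesis by simp
  qed
  have mem: "l0 \<in> spectrum A" if l0: "l0 \<noteq> 0"
  proof -
    have "g \<noteq> 0\<^sub>v n" using l0 unfolding l0_def by (auto simp: hinner_def)
    moreover have "A *\<^sub>v g = l0 \<cdot>\<^sub>v g" unfolding A_def l0_def using rank1_apply[OF g] g
      by (intro eq_vecI) (auto simp: mult_ac)
    ultimately show ?thesis unfolding spectrum_def eigenvalue_def eigenvector_def A_def using g by auto
  qed
  have fin: "finite (norm ` spectrum A)" using card_finite_spectrum(1)[OF Ac] by simp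
  have ne: "spectrum A \<noteq> {}" by (rule spectrum_non_empty[OF Ac n])
  have "Max (norm ` spectrum A) = cmod l0"
  proof (rule Max_eqI[OF fin])
    fix y assume "y \<in> norm ` spectrum A"
    then obtain x where x: "x \<in> spectrum A" "y = cmod x" by auto
    from sub[OF x(1)] show "y \<le> cmod l0" using x(2) by auto
  next
    show "cmod l0 \<in> norm ` spectrum A"
    proof (cases "l0 = 0")
      case True
      from ne obtain \<mu> where "\<mu> \<in> spectrum A" by auto
      with sub[OF this] True show ?thesis by force
    next
      case False then show ?thesis using mem by auto
    qed
  qed
  then show ?thesis unfolding spectral_radius_def A_def l0_def .
qed

lemma real_spec_rank1:
  fixes f g :: "real vec"
  assumes n: "n > 0" and g: "g \<in> carrier_vec n" and f: "f \<in> carrier_vec n"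
  shows "real_spectral_radius (mat n n (\<lambda>(k, l). g $ k * of_real q * conjugate (f $ l))) = norm (of_real q * hinner g f)"
proof -
  define g' where "g' = map_vec complex_of_real g"
  define f' where "f' = map_vec complex_of_real f"
  have eq: "map_mat complex_of_real (mat n n (\<lambda>(k, l). g $ k * of_real q * conjugate (f $ l)))
     = mat n n (\<lambda>(k, l). g' $ k * complex_of_real q * conjugate (f' $ l))"
    unfolding g'_def f'_def using g f by (intro eq_matI) auto
  have hi: "hinner g' f' = complex_of_real (hinner g f)"
    unfolding g'_def f'_def hinner_def using g f by simp
  have "real_spectral_radius (mat n n (\<lambda>(k, l). g $ k * of_real q * conjugate (f $ l)))
      = cmod (complex_of_real q * hinner g' f')"
    unfolding real_spectral_radius_def eq
    by (rule spec_rank1[OF n]) (auto simp: g'_def f'_def g f)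
  also have "\<dots> = norm (of_real q * hinner g f)" unfolding hi by (simp add: norm_mult abs_mult)
  finally show ?thesis .
qed

lemma pert_one:
  fixes \<alpha> x s r M :: real
  assumes a: "\<alpha> \<ge> 0" and x: "x \<ge> 0" and s: "s \<ge> 0" and le: "\<alpha> * x\<^sup>2 \<le> M" and M: "M > 0"
    and eqr: "\<alpha> * x\<^sup>2 = M \<Longrightarrow> r < 0"
  shows "\<exists>\<epsilon>>0. \<forall>t. 0 < t \<and> t \<le> \<epsilon> \<longrightarrow> \<alpha>\<^sup>2 * x\<^sup>2 * (x\<^sup>2 + 2 * t * r + t\<^sup>2 * s) < M\<^sup>2"
proof (cases "\<alpha> * x\<^sup>2 < M")
  case True
  define D where "D = M\<^sup>2 - \<alpha>\<^sup>2 * x\<^sup>2 * x\<^sup>2"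
  have ax0: "0 \<le> \<alpha> * x\<^sup>2" using a by simp
  have "(\<alpha> * x\<^sup>2)\<^sup>2 < M\<^sup>2" using True ax0 by (intro power_strict_mono) auto
  then have D: "D > 0" unfolding D_def by (simp add: power_mult_distrib power2_eq_square mult_ac)
  define K where "K = \<alpha>\<^sup>2 * x\<^sup>2 * (2 * \<bar>r\<bar> + s)"
  have K: "K \<ge> 0" unfolding K_def using s by simp
  define \<epsilon> where "\<epsilon> = min 1 (D / (K + 1))"
  have "\<epsilon> > 0" unfolding \<epsilon>_def using D K by simp
  moreover have "\<alpha>\<^sup>2 * x\<^sup>2 * (x\<^sup>2 + 2 * t * r + t\<^sup>2 * s) < M\<^sup>2" if t: "0 < t" "t \<le> \<epsilon>" for t
  proof -
    have t1: "t \<le> 1" and tD: "t \<le> D / (K + 1)" using t unfolding \<epsilon>_def by auto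
    have "t\<^sup>2 * s \<le> t * s" using t t1 s by (simp add: power2_eq_square mult_right_mono)
    moreover have "2 * t * r \<le> 2 * t * \<bar>r\<bar>" using t by simp
    ultimately have "2 * t * r + t\<^sup>2 * s \<le> t * (2 * \<bar>r\<bar> + s)" by (simp add: algebra_simps)
    then have "\<alpha>\<^sup>2 * x\<^sup>2 * (2 * t * r + t\<^sup>2 * s) \<le> \<alpha>\<^sup>2 * x\<^sup>2 * (t * (2 * \<bar>r\<bar> + s))"
      by (intro mult_left_mono) auto
    also have "\<dots> = t * K" unfolding K_def by simp
    also have "\<dots> \<le> D / (K + 1) * K" using tD K by (intro mult_right_mono) auto
    also have "\<dots> < D"
    proof -
      have "D / (K + 1) * K = D * (K / (K + 1))" by simp
      also have "\<dots> < D * 1" using D K by (intro mult_strict_left_mono) auto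
      finally show ?thesis by simp
    qed
    finally have "\<alpha>\<^sup>2 * x\<^sup>2 * (2 * t * r + t\<^sup>2 * s) < D" .
    then show ?thesis unfolding D_def by (simp add: algebra_simps)
  qed
  ultimately show ?thesis by blast
next
  case False
  then have eq: "\<alpha> * x\<^sup>2 = M" using le by simp
  then have r: "r < 0" by (rule eqr)
  have pos: "\<alpha>\<^sup>2 * x\<^sup>2 > 0"
  proof -
    have "\<alpha> \<noteq> 0" "x \<noteq> 0" using eq M by auto
    then show ?thesis by simp
  qed
  define \<epsilon> where "\<epsilon> = min 1 (- r / (s + 1))"
  have "\<epsilon> > 0" unfolding \<epsilon>_def using r s by (simp add: divide_neg_pos)
  moreover have "\<alpha>\<^sup>2 * x\<^sup>2 * (x\<^sup>2 + 2 * t * r + t\<^sup>2 * s) < M\<^sup>2" if t: "0 < t" "t \<le> \<epsilon>" for t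
  proof -
    have tr: "t \<le> - r / (s + 1)" using t unfolding \<epsilon>_def by auto
    have "t * s \<le> (- r / (s + 1)) * s" using tr s by (intro mult_right_mono) auto
    also have "\<dots> = (-r) * (s / (s + 1))" by simp
    also have "\<dots> < (-r) * 1" using r s by (intro mult_strict_left_mono) auto
    finally have "t * s < - r" by simp
    then have "2 * r + t * s < 0" using r by simp
    then have "t * (2 * r + t * s) < 0" using t by (simp add: mult_pos_neg)
    then have "x\<^sup>2 + 2 * t * r + t\<^sup>2 * s < x\<^sup>2" by (simp add: algebra_simps power2_eq_square)
    then have "\<alpha>\<^sup>2 * x\<^sup>2 * (x\<^sup>2 + 2 * t * r + t\<^sup>2 * s) < \<alpha>\<^sup>2 * x\<^sup>2 * x\<^sup>2"
      using pos by (intro mult_strict_left_mono) auto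
    also have "\<dots> = M\<^sup>2" using eq by (simp add: power2_eq_square algebra_simps)
    finally show ?thesis .
  qed
  ultimately show ?thesis by blast
qed

lemma pick_t:
  assumes "\<forall>i<(N::nat). \<exists>\<epsilon>>0. \<forall>t. 0 < t \<and> t \<le> \<epsilon> \<longrightarrow> P i (t::real)"
  shows "\<exists>t0>0. \<forall>t. 0 < t \<and> t \<le> t0 \<longrightarrow> (\<forall>i<N. P i t)"
  using assms
proof (induction N)
  case 0 then show ?case by (intro exI[of _ 1]) auto
next
  case (Suc N)
  then obtain t0 where t0: "t0 > 0" "\<forall>t. 0 < t \<and> t \<le> t0 \<longrightarrow> (\<forall>i<N. P i t)" by auto
  from Suc.prems obtain e where e: "e > 0" "\<forall>t. 0 < t \<and> t \<le> e \<longrightarrow> P N t" by auto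
  show ?case using t0 e by (intro exI[of _ "min t0 e"]) (auto simp: less_Suc_eq)
qed

lemma comp_pert:
  fixes a b :: "'a::hfield"
  shows "(norm (a + of_real t * b))\<^sup>2 = (norm a)\<^sup>2 + 2 * t * hre (b * conjugate a) + t\<^sup>2 * (norm b)\<^sup>2"
proof -
  have "(of_real ((norm (a + of_real t * b))\<^sup>2) :: 'a) = (a + of_real t * b) * conjugate (a + of_real t * b)"
    by (simp only: mult_conj)
  also have "\<dots> = a * conjugate a + of_real t * (b * conjugate a + conjugate (b * conjugate a)) + of_real t * of_real t * (b * conjugate b)"
    by (simp add: conjugate_dist_add conjugate_dist_mul algebra_simps)
  also have "\<dots> = of_real ((norm a)\<^sup>2 + 2 * t * hre (b * conjugate a) + t\<^sup>2 * (norm b)\<^sup>2)"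
    by (simp only: hre mult_conj) (simp add: algebra_simps power2_eq_square)
  finally show ?thesis by (simp only: of_real_eq_iff)
qed

lemma hnorm_pert:
  fixes F G :: "'a::hfield vec"
  assumes F: "F \<in> carrier_vec n" and G: "G \<in> carrier_vec n"
  shows "(hnorm (vec n (\<lambda>k. F $ k + of_real t * (G $ k - F $ k))))\<^sup>2
    = (hnorm F)\<^sup>2 + 2 * t * hre (hinner (vec n (\<lambda>k. G $ k - F $ k)) F) + t\<^sup>2 * (hnorm (vec n (\<lambda>k. G $ k - F $ k)))\<^sup>2"
  using F G by (simp add: hnorm_sq comp_pert sum.distrib hinner_def hre_sum sum_distrib_left)

lemma hinner_split:
  fixes F G :: "'a::hfield vec"
  assumes F: "F \<in> carrier_vec n" and G: "G \<in> carrier_vec n"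
  shows "hinner G F = hinner F F + hinner (vec n (\<lambda>k. G $ k - F $ k)) F"
  using F G by (simp add: hinner_def sum.distrib[symmetric] algebra_simps)

lemma is_dual_cong:
  assumes "\<forall>i<N. G i = G' i"
  shows "is_dual n N F G = is_dual n N F G'"
proof -
  have "synthesis_op n N G = synthesis_op n N G'" "analysis_op n N G = analysis_op n N G'"
    using assms by (auto simp: synthesis_op_def analysis_op_def intro!: eq_matI)
  moreover have "is_frame n N G = is_frame n N G'" using assms unfolding is_frame_def by simp
  ultimately show ?thesis unfolding is_dual_def by simp
qed

lemma erasure_img: "erasure_mats n N p = (\<lambda>i. mat N N (\<lambda>(j, k). if j = i \<and> k = i then of_real (weight_num n N p i) else 0)) ` {..<N}"
  unfolding erasure_mats_def by auto

lemma d1p_eq: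
  fixes F G :: "nat \<Rightarrow> 'a::hfield vec"
  assumes G: "\<forall>i<N. G i \<in> carrier_vec n" and F: "\<forall>i<N. F i \<in> carrier_vec n"
  shows "d1p n N p F G = Max ((\<lambda>i. \<bar>weight_num n N p i\<bar> * hnorm (F i) * hnorm (G i)) ` {..<N})"
  unfolding d1p_def erasure_img image_image
  using G F by (intro arg_cong[where f=Max] image_cong refl) (simp add: rank1 opnorm_rank1)

lemma R1p_eq:
  fixes F G :: "nat \<Rightarrow> 'a::hfield vec"
  assumes G: "\<forall>i<N. G i \<in> carrier_vec n" and F: "\<forall>i<N. F i \<in> carrier_vec n"
    and rho: "\<forall>g f (q::real). g \<in> carrier_vec n \<longrightarrow> f \<in> carrier_vec n \<longrightarrow>
       rho (mat n n (\<lambda>(k, l). g $ k * of_real q * conjugate (f $ l))) = norm (of_real q * hinner g f :: 'a)"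
  shows "R1p rho n N p F G = Max ((\<lambda>i. \<bar>weight_num n N p i\<bar> * norm (hinner (G i) (F i))) ` {..<N})"
  unfolding R1p_def erasure_img image_image
  using G F rho by (intro arg_cong[where f=Max] image_cong refl) (simp add: rank1 norm_mult)

lemma inf_char:
  fixes \<phi> :: "'b \<Rightarrow> real"
  assumes C: "P C" and nn: "\<forall>G. P G \<longrightarrow> 0 \<le> \<phi> G"
  shows "(\<phi> C = Inf {\<phi> G | G. P G}) \<longleftrightarrow> (\<forall>G. P G \<longrightarrow> \<phi> C \<le> \<phi> G)"
proof
  assume eq: "\<phi> C = Inf {\<phi> G | G. P G}"
  have bdd: "bdd_below {\<phi> G | G. P G}" using nn by (intro bdd_belowI[of _ 0]) auto
  show "\<forall>G. P G \<longrightarrow> \<phi> C \<le> \<phi> G"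
    using cInf_lower[OF _ bdd] eq by auto
next
  assume "\<forall>G. P G \<longrightarrow> \<phi> C \<le> \<phi> G"
  then show "\<phi> C = Inf {\<phi> G | G. P G}"
    using C by (intro cInf_eq_minimum[symmetric]) auto
qed

lemma gt_dual:
  fixes F G :: "nat \<Rightarrow> 'a::hfield vec"
  assumes P: "is_parseval n N F" and D: "is_dual n N F G"
  shows "is_dual n N F (\<lambda>i. vec n (\<lambda>k. F i $ k + of_real t * (G i $ k - F i $ k)))"
proof -
  define H where "H = (\<lambda>i. vec n (\<lambda>k. F i $ k + of_real t * (G i $ k - F i $ k)))"
  have Hc: "\<forall>i<N. H i \<in> carrier_vec n" unfolding H_def by simp
  have rF: "f $ k = (\<Sum>i<N. hinner f (F i) * F i $ k)" if "f \<in> carrier_vec n" "k < n" for f k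
    using parseval_recon[OF P that(1)] recon_iff[OF that(1), of N F F] that(2) by auto
  have rG1: "f $ k = (\<Sum>i<N. hinner f (F i) * G i $ k)" if "f \<in> carrier_vec n" "k < n" for f k
    using D recon_iff[OF that(1), of N G F] that unfolding is_dual_def by auto
  have rG2: "f $ k = (\<Sum>i<N. hinner f (G i) * F i $ k)" if "f \<in> carrier_vec n" "k < n" for f k
    using D recon_iff[OF that(1), of N F G] that unfolding is_dual_def by auto
  have H1: "f $ k = (\<Sum>i<N. hinner f (F i) * H i $ k)" if f: "f \<in> carrier_vec n" and k: "k < n" for f k
  proof -
    have "(\<Sum>i<N. hinner f (F i) * H i $ k) = (\<Sum>i<N. hinner f (F i) * F i $ k) +
        of_real t * ((\<Sum>i<N. hinner f (F i) * G i $ k) - (\<Sum>i<N. hinner f (F i) * F i $ k))"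
      unfolding H_def using k by (simp add: algebra_simps sum.distrib sum_subtractf sum_distrib_left)
    also have "\<dots> = f $ k" using rF[OF f k] rG1[OF f k] by simp
    finally show ?thesis by simp
  qed
  have hinH: "hinner f (H i) = hinner f (F i) + of_real t * (hinner f (G i) - hinner f (F i))"
    if f: "f \<in> carrier_vec n" for f i
    unfolding H_def hinner_def using f
    by (simp add: conjugate_dist_add conjugate_dist_mul conj_diff algebra_simps sum.distrib sum_subtractf sum_distrib_left)
  have H2: "f $ k = (\<Sum>i<N. hinner f (H i) * F i $ k)" if f: "f \<in> carrier_vec n" and k: "k < n" for f k
  proof -
    have "(\<Sum>i<N. hinner f (H i) * F i $ k) = (\<Sum>i<N. hinner f (F i) * F i $ k) +
        of_real t * ((\<Sum>i<N. hinner f (G i) * F i $ k) - (\<Sum>i<N. hinner f (F i) * F i $ k))"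
      unfolding hinH[OF f] by (simp add: algebra_simps sum.distrib sum_subtractf sum_distrib_left)
    also have "\<dots> = f $ k" using rF[OF f k] rG2[OF f k] by simp
    finally show ?thesis by simp
  qed
  have fr: "is_frame n N H" using H2 by (intro frame_of_recon[OF P Hc]) auto
  show ?thesis unfolding H_def[symmetric] is_dual_def
    using fr H1 H2 recon_iff[of _ n N H F] recon_iff[of _ n N F H] by auto
qed

theorem main_generic:
  fixes F :: "nat \<Rightarrow> 'a::hfield vec" and rho :: "'a mat \<Rightarrow> real"
  assumes n: "0 < n" "n \<le> N" and P: "is_parseval n N F"
    and rho: "\<forall>g f (q::real). g \<in> carrier_vec n \<longrightarrow> f \<in> carrier_vec n \<longrightarrow>
       rho (mat n n (\<lambda>(k, l). g $ k * of_real q * conjugate (f $ l))) = norm (of_real q * hinner g f :: 'a)"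
  shows "prob_optimal_dual n N p F (canonical_dual n N F) \<longleftrightarrow> prob_spec_optimal_dual rho n N p F (canonical_dual n N F)"
proof -
  define C where "C = canonical_dual n N F"
  define w where "w i = weight_num n N p i" for i
  have N0: "0 < N" using n by simp
  have Fc: "\<forall>i<N. F i \<in> carrier_vec n" using P unfolding is_parseval_def by auto
  have CF: "\<forall>i<N. C i = F i" unfolding C_def using canonical_dual_parseval[OF P] by auto
  have Cc: "\<forall>i<N. C i \<in> carrier_vec n" using CF Fc by auto
  have dualC: "is_dual n N F C" using is_dual_cong[OF CF] parseval_dual_self[OF P] by simp
  have dcar: "\<forall>i<N. G i \<in> carrier_vec n" if "is_dual n N F G" for G
    using that unfolding is_dual_def is_frame_def by auto
  define a where "a G i = \<bar>w i\<bar> * hnorm (F i) * hnorm (G i :: 'a vec)" for G i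
  define b where "b G i = \<bar>w i\<bar> * norm (hinner (G i :: 'a vec) (F i))" for G i
  have dG: "d1p n N p F G = Max (a G ` {..<N})" if "\<forall>i<N. G i \<in> carrier_vec n" for G
    unfolding a_def w_def by (rule d1p_eq[OF that Fc])
  have RG: "R1p rho n N p F G = Max (b G ` {..<N})" if "\<forall>i<N. G i \<in> carrier_vec n" for G
    unfolding b_def w_def by (rule R1p_eq[OF that Fc rho])
  define M where "M = Max (a F ` {..<N})"
  have fin: "finite (X ` {..<N})" "X ` {..<N} \<noteq> {}" for X :: "nat \<Rightarrow> real" using N0 by auto
  have dC: "d1p n N p F C = M" unfolding dG[OF Cc] M_def a_def using CF
    by (intro arg_cong[where f=Max] image_cong) auto
  have RC: "R1p rho n N p F C = M" unfolding RG[OF Cc] M_def using CF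
    by (intro arg_cong[where f=Max] image_cong) (auto simp: a_def b_def hinner_self norm_of_real power2_eq_square norm_mult)
  have a_nn: "0 \<le> a G i" for G i unfolding a_def by simp
  have b_nn: "0 \<le> b G i" for G i unfolding b_def by simp
  have Max_nn: "0 \<le> Max (X ` {..<N})" if "\<forall>i. 0 \<le> X i" for X :: "nat \<Rightarrow> real"
  proof -
    have "X 0 \<le> Max (X ` {..<N})" using N0 by (intro Max_ge[OF fin(1)]) auto
    then show ?thesis using that[rule_format, of 0] by linarith
  qed
  have opt: "prob_optimal_dual n N p F C \<longleftrightarrow> (\<forall>G. is_dual n N F G \<longrightarrow> M \<le> Max (a G ` {..<N}))"
  proof -
    have "prob_optimal_dual n N p F C \<longleftrightarrow> (\<forall>G. is_dual n N F G \<longrightarrow> d1p n N p F C \<le> d1p n N p F G)"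
      unfolding prob_optimal_dual_def using dualC
      by (subst inf_char[of "is_dual n N F" C "d1p n N p F"]) (auto simp: dG dcar a_nn Max_nn)
    then show ?thesis using dC dG dcar by auto
  qed
  have spec: "prob_spec_optimal_dual rho n N p F C \<longleftrightarrow> (\<forall>G. is_dual n N F G \<longrightarrow> M \<le> Max (b G ` {..<N}))"
  proof -
    have "prob_spec_optimal_dual rho n N p F C \<longleftrightarrow> (\<forall>G. is_dual n N F G \<longrightarrow> R1p rho n N p F C \<le> R1p rho n N p F G)"
      unfolding prob_spec_optimal_dual_def using dualC
      by (subst inf_char[of "is_dual n N F" C "R1p rho n N p F"]) (auto simp: RG dcar b_nn Max_nn)
    then show ?thesis using RC RG dcar by auto
  qed
  have ba: "b G i \<le> a G i" if "G i \<in> carrier_vec n" "i < N" for G i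
  proof -
    have "norm (hinner (G i) (F i)) \<le> hnorm (G i) * hnorm (F i)" using that Fc by (intro cs) auto
    then have "\<bar>w i\<bar> * norm (hinner (G i) (F i)) \<le> \<bar>w i\<bar> * (hnorm (G i) * hnorm (F i))"
      by (intro mult_left_mono) auto
    then show ?thesis unfolding a_def b_def by (simp add: mult_ac)
  qed
  have "(\<forall>G. is_dual n N F G \<longrightarrow> M \<le> Max (a G ` {..<N})) \<longleftrightarrow> (\<forall>G. is_dual n N F G \<longrightarrow> M \<le> Max (b G ` {..<N}))"
  proof
    assume Hb: "\<forall>G. is_dual n N F G \<longrightarrow> M \<le> Max (b G ` {..<N})"
    show "\<forall>G. is_dual n N F G \<longrightarrow> M \<le> Max (a G ` {..<N})"
    proof (intro allI impI)
      fix G assume G: "is_dual n N F G"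
      have "Max (b G ` {..<N}) \<le> Max (a G ` {..<N})"
        unfolding Max_le_iff[OF fin]
      proof
        fix y assume "y \<in> b G ` {..<N}"
        then obtain i where i: "i < N" "y = b G i" by auto
        have "b G i \<le> a G i" using ba[of G i] dcar[OF G] i by auto
        also have "\<dots> \<le> Max (a G ` {..<N})" using i by (intro Max_ge[OF fin(1)]) auto
        finally show "y \<le> Max (a G ` {..<N})" using i by simp
      qed
      then show "M \<le> Max (a G ` {..<N})" using Hb G by force
    qed
  next
    assume Ha: "\<forall>G. is_dual n N F G \<longrightarrow> M \<le> Max (a G ` {..<N})"
    show "\<forall>G. is_dual n N F G \<longrightarrow> M \<le> Max (b G ` {..<N})"
    proof (intro allI impI, rule ccontr)
      fix G assume G: "is_dual n N F G" and "\<not> M \<le> Max (b G ` {..<N})"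
      then have lt: "Max (b G ` {..<N}) < M" by simp
      have Gc: "\<forall>i<N. G i \<in> carrier_vec n" using dcar[OF G] .
      have bi: "b G i < M" if "i < N" for i using lt that unfolding Max_less_iff[OF fin] by auto
      have M0: "M > 0" using bi[OF N0] b_nn[of G 0] by simp
      define h where "h i = vec n (\<lambda>k. G i $ k - F i $ k)" for i
      define r where "r i = hre (hinner (h i) (F i))" for i
      define s where "s i = (hnorm (h i))\<^sup>2" for i
      define x where "x i = hnorm (F i)" for i
      define \<alpha> where "\<alpha> i = \<bar>w i\<bar>" for i
      have aF: "a F i = \<alpha> i * (x i)\<^sup>2" for i unfolding a_def \<alpha>_def x_def by (simp add: power2_eq_square)
      have each: "\<exists>\<epsilon>>0. \<forall>t. 0 < t \<and> t \<le> \<epsilon> \<longrightarrow> (\<alpha> i)\<^sup>2 * (x i)\<^sup>2 * ((x i)\<^sup>2 + 2 * t * r i + t\<^sup>2 * s i) < M\<^sup>2"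
        if i: "i < N" for i
      proof (rule pert_one)
        show "0 \<le> \<alpha> i" "0 \<le> x i" "0 \<le> s i" "0 < M" unfolding \<alpha>_def x_def s_def using M0 by auto
        show "\<alpha> i * (x i)\<^sup>2 \<le> M" unfolding aF[symmetric] M_def using i by (intro Max_ge[OF fin(1)]) auto
        assume eq: "\<alpha> i * (x i)\<^sup>2 = M"
        then have apos: "\<alpha> i > 0" using M0 \<alpha>_def by (cases "\<alpha> i = 0") auto
        have "\<alpha> i * norm (hinner (G i) (F i)) < \<alpha> i * (x i)\<^sup>2"
          using bi[OF i] eq unfolding b_def \<alpha>_def by simp
        then have nlt: "norm (hinner (G i) (F i)) < (x i)\<^sup>2" using apos by simp
        have "hinner (G i) (F i) = of_real ((x i)\<^sup>2) + hinner (h i) (F i)"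
          unfolding h_def x_def using hinner_split[of "F i" n "G i"] Fc Gc i by (simp add: hinner_self)
        then have "hre (hinner (G i) (F i)) = (x i)\<^sup>2 + r i" unfolding r_def by (simp only: hre_add hre_of_real)
        then show "r i < 0" using hre_le[of "hinner (G i) (F i)"] nlt by simp
      qed
      have each': "\<forall>i<N. \<exists>\<epsilon>>0. \<forall>t. 0 < t \<and> t \<le> \<epsilon> \<longrightarrow> (\<alpha> i)\<^sup>2 * (x i)\<^sup>2 * ((x i)\<^sup>2 + 2 * t * r i + t\<^sup>2 * s i) < M\<^sup>2"
        by (intro allI impI each)
      from pick_t[OF each'] obtain t0 where t0: "t0 > 0" "\<forall>t. 0 < t \<and> t \<le> t0 \<longrightarrow>
          (\<forall>i<N. (\<alpha> i)\<^sup>2 * (x i)\<^sup>2 * ((x i)\<^sup>2 + 2 * t * r i + t\<^sup>2 * s i) < M\<^sup>2)"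
        by blast
      have all: "\<forall>i<N. (\<alpha> i)\<^sup>2 * (x i)\<^sup>2 * ((x i)\<^sup>2 + 2 * t0 * r i + t0\<^sup>2 * s i) < M\<^sup>2"
        by (rule mp[OF HOL.spec[OF t0(2), of t0]]) (use t0(1) in simp)
      define gt where "gt i = vec n (\<lambda>k. F i $ k + of_real t0 * (G i $ k - F i $ k))" for i
      have gtd: "is_dual n N F gt" unfolding gt_def by (rule gt_dual[OF P G])
      have "a gt i < M" if i: "i < N" for i
      proof -
        have "(hnorm (gt i))\<^sup>2 = (hnorm (F i))\<^sup>2 + 2 * t0 * hre (hinner (h i) (F i)) + t0\<^sup>2 * (hnorm (h i))\<^sup>2"
          unfolding gt_def h_def by (rule hnorm_pert) (use Fc Gc i in auto)
        then have hg: "(hnorm (gt i))\<^sup>2 = (x i)\<^sup>2 + 2 * t0 * r i + t0\<^sup>2 * s i"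
          by (simp only: x_def r_def s_def)
        have "(a gt i)\<^sup>2 = (\<alpha> i)\<^sup>2 * (x i)\<^sup>2 * (hnorm (gt i))\<^sup>2"
          unfolding a_def \<alpha>_def x_def by (simp only: power_mult_distrib)
        then have "(a gt i)\<^sup>2 = (\<alpha> i)\<^sup>2 * (x i)\<^sup>2 * ((x i)\<^sup>2 + 2 * t0 * r i + t0\<^sup>2 * s i)"
          by (simp only: hg)
        also have "\<dots> < M\<^sup>2" by (rule all[rule_format, OF i])
        finally have sq: "(a gt i)\<^sup>2 < M\<^sup>2" .
        show ?thesis by (rule power_less_imp_less_base[OF sq]) (use M0 in simp)
      qed
      then have "Max (a gt ` {..<N}) < M" unfolding Max_less_iff[OF fin] by auto
      moreover have "M \<le> Max (a gt ` {..<N})" by (rule Ha[rule_format, OF gtd])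
      ultimately show False by linarith
    qed
  qed
  then have "prob_optimal_dual n N p F C \<longleftrightarrow> prob_spec_optimal_dual rho n N p F C"
    using opt spec by simp
  then show ?thesis by (simp only: C_def)
qed

theorem theorem4p2:
  shows "(\<forall>(n::nat) (N::nat) (F :: nat \<Rightarrow> complex vec) (p :: nat \<Rightarrow> real).
            0 < n \<longrightarrow> n \<le> N \<longrightarrow> is_parseval n N F \<longrightarrow> is_prob_seq N p \<longrightarrow>
            (\<forall>i<N. (\<Sum>j<N. p j) - p i \<noteq> 0) \<longrightarrow>
            (prob_optimal_dual n N p F (canonical_dual n N F) \<longleftrightarrow>
             prob_spec_optimal_dual spectral_radius n N p F (canonical_dual n N F)))
       \<and> (\<forall>(n::nat) (N::nat) (F :: nat \<Rightarrow> real vec) (p :: nat \<Rightarrow> real).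
            0 < n \<longrightarrow> n \<le> N \<longrightarrow> is_parseval n N F \<longrightarrow> is_prob_seq N p \<longrightarrow>
            (\<forall>i<N. (\<Sum>j<N. p j) - p i \<noteq> 0) \<longrightarrow>
            (prob_optimal_dual n N p F (canonical_dual n N F) \<longleftrightarrow>
             prob_spec_optimal_dual real_spectral_radius n N p F (canonical_dual n N F)))"
proof (intro conjI allI impI)
  fix n N :: nat and F :: "nat \<Rightarrow> complex vec" and p :: "nat \<Rightarrow> real"
  assume n: "0 < n" "n \<le> N" and P: "is_parseval n N F"
  show "prob_optimal_dual n N p F (canonical_dual n N F) \<longleftrightarrow>
             prob_spec_optimal_dual spectral_radius n N p F (canonical_dual n N F)"
  proof -
    have rho: "\<forall>g f (q::real). g \<in> carrier_vec n \<longrightarrow> f \<in> carrier_vec n \<longrightarrow>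
       spectral_radius (mat n n (\<lambda>(k, l). g $ k * of_real q * conjugate (f $ l))) = norm (of_real q * hinner g f :: complex)"
      by (intro allI impI spec_rank1[OF n(1)])
    show ?thesis by (rule main_generic[OF n P rho])
  qed
next
  fix n N :: nat and F :: "nat \<Rightarrow> real vec" and p :: "nat \<Rightarrow> real"
  assume n: "0 < n" "n \<le> N" and P: "is_parseval n N F"
  show "prob_optimal_dual n N p F (canonical_dual n N F) \<longleftrightarrow>
             prob_spec_optimal_dual real_spectral_radius n N p F (canonical_dual n N F)"
  proof -
    have rho: "\<forall>g f (q::real). g \<in> carrier_vec n \<longrightarrow> f \<in> carrier_vec n \<longrightarrow>
       real_spectral_radius (mat n n (\<lambda>(k, l). g $ k * of_real q * conjugate (f $ l))) = norm (of_real q * hinner g f :: real)"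
      by (intro allI impI real_spec_rank1[OF n(1)])
    show ?thesis by (rule main_generic[OF n P rho])
  qed
qed

end
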